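(* If $X$ is a connected, locally $\mathfrak{c}$, sequential Hausdorff space, then $|X|\le\mathfrak{c}$.
   Context: A space $X$ is locally $\mathfrak{c}$ if every point of $X$ has a neighbourhood of cardinality $\le\mathfrak{c}$. *)

theory Defs
  imports "HOL-Analysis.Analysis" "HOL-Library.Equipollence"
begin

definition sequentially_closedin :: "'a topology \<Rightarrow> 'a set \<Rightarrow> bool" where
  "sequentially_closedin X S \<longleftrightarrow>
     (\<forall>(\<sigma>::nat \<Rightarrow> 'a) l. (\<forall>n. \<sigma> n \<in> S) \<and> limitin X \<sigma> l sequentially \<longrightarrow> l \<in> S)"

definition sequential_space :: "'a topology \<Rightarrow> bool" where
  "sequential_space X \<longleftrightarrow>
     (\<forall>S. S \<subseteq> topspace X \<and> sequentially_closedin X S \<longrightarrow> closedin X S)"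

definition locally_continuum :: "'a topology \<Rightarrow> bool" where
  "locally_continuum X \<longleftrightarrow>
     (\<forall>x\<in>topspace X. \<exists>N. N \<subseteq> topspace X \<and> x \<in> X interior_of N \<and> N \<lesssim> (UNIV :: real set))"

end

theory Submission
  imports Defs
begin

inductive drv :: "'a topology \<Rightarrow> 'a \<Rightarrow> ('a \<Rightarrow> 'a set) \<Rightarrow> ('a \<Rightarrow> 'a \<Rightarrow> nat set)
   \<Rightarrow> (nat list \<Rightarrow> nat \<times> nat set) \<Rightarrow> 'a \<Rightarrow> bool"
  for X x0 N g where
  base: "t [] = (0,{}) \<Longrightarrow> drv X x0 N g t x0"
| nb: "drv X x0 N g (\<lambda>l. t (0#l)) z \<Longrightarrow> y \<in> N z \<Longrightarrow> t [] = (1, g z y) \<Longrightarrow> drv X x0 N g t y"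
| lim: "(\<And>n. drv X x0 N g (\<lambda>l. t (n#l)) (\<sigma> n)) \<Longrightarrow> limitin X \<sigma> y sequentially
        \<Longrightarrow> t [] = (2,{}) \<Longrightarrow> drv X x0 N g t y"

lemma drv_fun:
  assumes H: "Hausdorff_space X" and inj: "\<And>z. inj_on (g z) (N z)"
  shows "drv X x0 N g t y \<Longrightarrow> drv X x0 N g t y' \<Longrightarrow> y = y'"
proof (induction t y arbitrary: y' rule: drv.induct)
  case (base t)
  from base.prems show ?case
    by cases (use base.hyps in auto)
next
  case (nb t z y)
  from nb.prems show ?case
  proof cases
    case (nb z')
    then have "z = z'" using nb.IH by blast
    then show ?thesis using nb.hyps nb inj[of z] by (auto simp: inj_on_def)
  qed (use nb.hyps in auto)
next
  case (lim t \<sigma> y)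
  from lim.prems show ?case
  proof cases
    case (lim \<sigma>')
    then have "\<sigma> = \<sigma>'" using lim.IH by blast
    then show ?thesis using lim.hyps lim limitin_Hausdorff_unique[OF _ _ trivial_limit_sequentially H] by blast
  qed (use lim.hyps in auto)
qed

lemma drv_top:
  assumes "\<And>z. N z \<subseteq> topspace X" "x0 \<in> topspace X"
  shows "drv X x0 N g t y \<Longrightarrow> y \<in> topspace X"
  by (induction rule: drv.induct) (use assms limitin_topspace in auto)

lemma enc_lepoll: "(UNIV :: (nat list \<Rightarrow> nat \<times> nat set) set) \<lesssim> (UNIV :: real set)"
proof -
  define S where "S = (\<lambda>t::nat list \<Rightarrow> nat \<times> nat set.
     {(l, Inl (fst (t l)) :: nat + nat) |l. True} \<union> {(l, Inr k) |l k. k \<in> snd (t l)})"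
  have injS: "inj S"
  proof (rule injI)
    fix t t' assume eq: "S t = S t'"
    show "t = t'"
    proof
      fix l
      have "(l, Inl (fst (t l))) \<in> S t" unfolding S_def by simp
      then have "(l, Inl (fst (t l))) \<in> S t'" using eq by simp
      then have 1: "fst (t l) = fst (t' l)" unfolding S_def by auto
      have "snd (t l) = snd (t' l)"
      proof
        show "snd (t l) \<subseteq> snd (t' l)"
        proof
          fix k assume "k \<in> snd (t l)"
          then have "(l, Inr k) \<in> S t" unfolding S_def by simp
          then have "(l, Inr k) \<in> S t'" using eq by simp
          then show "k \<in> snd (t' l)" unfolding S_def by auto
        qed
        show "snd (t' l) \<subseteq> snd (t l)"
        proof
          fix k assume "k \<in> snd (t' l)"
          then have "(l, Inr k) \<in> S t'" unfolding S_def by simp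
          then have "(l, Inr k) \<in> S t" using eq by simp
          then show "k \<in> snd (t l)" unfolding S_def by auto
        qed
      qed
      with 1 show "t l = t' l" by (simp add: prod_eq_iff)
    qed
  qed
  have "inj (\<lambda>t. to_nat ` S t)"
    using injS by (simp add: inj_def inj_image_eq_iff[OF inj_to_nat])
  then have "(UNIV :: (nat list \<Rightarrow> nat \<times> nat set) set) \<lesssim> (UNIV :: nat set set)"
    unfolding lepoll_def by blast
  also have "\<dots> \<lesssim> (UNIV :: real set)"
    using eqpoll_imp_lepoll nat_sets_eqpoll_reals by blast
  finally show ?thesis .
qed

theorem corollary4p4:
  fixes X :: "'a topology"
  assumes "connected_space X" and "locally_continuum X"
    and "sequential_space X" and "Hausdorff_space X"
  shows "topspace X \<lesssim> (UNIV :: real set)"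
proof (cases "topspace X = {}")
  case True then show ?thesis by (simp add: lepoll_def)
next
  case False
  then obtain x0 where x0: "x0 \<in> topspace X" by blast
  have "\<forall>x. \<exists>N. N \<subseteq> topspace X \<and> N \<lesssim> (UNIV :: real set) \<and> (x \<in> topspace X \<longrightarrow> x \<in> X interior_of N)"
  proof
    fix x
    have e: "({}::'a set) \<lesssim> (UNIV :: real set)" by (simp add: lepoll_def)
    show "\<exists>N. N \<subseteq> topspace X \<and> N \<lesssim> (UNIV :: real set) \<and> (x \<in> topspace X \<longrightarrow> x \<in> X interior_of N)"
    proof (cases "x \<in> topspace X")
      case True then show ?thesis using assms(2) unfolding locally_continuum_def by blast
    qed (use e in blast)
  qed
  then obtain N where N: "\<And>x. N x \<subseteq> topspace X"
    and Nint: "\<And>x. x \<in> topspace X \<Longrightarrow> x \<in> X interior_of N x"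
    and Nc: "\<And>x. N x \<lesssim> (UNIV :: real set)" by metis
  have rn: "(UNIV :: real set) \<lesssim> (UNIV :: nat set set)"
    using eqpoll_imp_lepoll eqpoll_sym nat_sets_eqpoll_reals by blast
  have "\<forall>x. \<exists>g::'a \<Rightarrow> nat set. inj_on g (N x)"
  proof
    fix x
    show "\<exists>g::'a \<Rightarrow> nat set. inj_on g (N x)"
    proof -
      have "N x \<lesssim> (UNIV :: nat set set)" using Nc rn lepoll_trans by blast
      then show ?thesis unfolding lepoll_def by blast
    qed
  qed
  then obtain g :: "'a \<Rightarrow> 'a \<Rightarrow> nat set" where g: "\<And>x. inj_on (g x) (N x)" by metis
  define U where "U = {y. \<exists>t. drv X x0 N g t y}"
  have Utop: "U \<subseteq> topspace X" using drv_top[of N X x0 g] N x0 unfolding U_def by blast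
  have x0U: "x0 \<in> U" unfolding U_def
    using drv.base[of "\<lambda>_. (0,{})" X x0 N g] by auto
  have "openin X U"
  proof (subst openin_subopen, intro ballI)
    fix y assume "y \<in> U"
    then obtain t where t: "drv X x0 N g t y" unfolding U_def by (rule CollectE) (erule exE)
    have "X interior_of N y \<subseteq> U"
    proof
      fix w assume "w \<in> X interior_of N y"
      then have w: "w \<in> N y" by (rule subsetD[OF interior_of_subset])
      let ?t = "\<lambda>l. case l of [] \<Rightarrow> (1, g y w) | n#l' \<Rightarrow> t l'"
      have "drv X x0 N g ?t w" proof (rule drv.nb[where z=y])
        show "drv X x0 N g (\<lambda>l. ?t (0#l)) y" using t by simp
      qed (use w in auto)
      then show "w \<in> U" unfolding U_def by blast
    qed
    moreover have "y \<in> X interior_of N y" using Nint[of y] \<open>y \<in> U\<close> Utop by auto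
    ultimately show "\<exists>T. openin X T \<and> y \<in> T \<and> T \<subseteq> U" using openin_interior_of by blast
  qed
  moreover have "closedin X U"
  proof -
    have "sequentially_closedin X U" unfolding sequentially_closedin_def
    proof (intro allI impI, elim conjE)
      fix \<sigma> :: "nat \<Rightarrow> 'a" and l
      assume s: "\<forall>n. \<sigma> n \<in> U" and lm: "limitin X \<sigma> l sequentially"
      have "\<forall>n. \<exists>t. drv X x0 N g t (\<sigma> n)" using s unfolding U_def by simp
      then obtain T where T0: "\<forall>n. drv X x0 N g (T n) (\<sigma> n)" using choice[of "\<lambda>n t. drv X x0 N g t (\<sigma> n)"] by blast
      have T: "\<And>n. drv X x0 N g (T n) (\<sigma> n)" using T0 by blast
      let ?t = "\<lambda>l. case l of [] \<Rightarrow> (2, {}) | n#l' \<Rightarrow> T n l'"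
      have h: "drv X x0 N g (\<lambda>l'. ?t (n#l')) (\<sigma> n)" for n using T[of n] by simp
      have h2: "?t [] = (2,{})" by simp
      have "drv X x0 N g ?t l" by (rule drv.lim[OF h lm h2])
      then show "l \<in> U" unfolding U_def by blast
    qed
    then show ?thesis using assms(3) Utop unfolding sequential_space_def by blast
  qed
  moreover have "openin X U \<and> closedin X U \<longrightarrow> U = {} \<or> U = topspace X"
    using assms(1) unfolding connected_space_clopen_in by blast
  ultimately have "U = topspace X" using x0U by blast
  have "inj_on (\<lambda>y. SOME t. drv X x0 N g t y) U"
  proof (rule inj_onI)
    fix y y' assume "y \<in> U" "y' \<in> U" and eq: "(SOME t. drv X x0 N g t y) = (SOME t. drv X x0 N g t y')"
    have "\<exists>t. drv X x0 N g t y" using \<open>y \<in> U\<close> unfolding U_def by simp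
    then have 1: "drv X x0 N g (SOME t. drv X x0 N g t y) y" by (rule someI_ex)
    have "\<exists>t. drv X x0 N g t y'" using \<open>y' \<in> U\<close> unfolding U_def by simp
    then have 2: "drv X x0 N g (SOME t. drv X x0 N g t y') y'" by (rule someI_ex)
    from 2 have "drv X x0 N g (SOME t. drv X x0 N g t y) y'" by (simp only: eq)
    with 1 show "y = y'" by (rule drv_fun[OF assms(4) g])
  qed
  then have "U \<lesssim> (UNIV :: (nat list \<Rightarrow> nat \<times> nat set) set)" unfolding lepoll_def by blast
  then have "U \<lesssim> (UNIV :: real set)" using enc_lepoll by (rule lepoll_trans)
  then show ?thesis using \<open>U = topspace X\<close> by simp
qed

end
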